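(* Let $A=kQ/I$ be a nondegenerate dimer algebra on a torus with center $Z$, and let $\psi:A\to A'$ be a cyclic contraction. If $A$ is a finitely generated $Z$-module, then $S$ is a finitely generated $R$-module.
   Context: Let $k$ be an algebraically closed field. A dimer quiver is a finite quiver $Q$ (vertices $Q_0$, arrows $Q_1$, head/tail $\operatorname{h},\operatorname{t}$) whose underlying graph embeds in a real two-torus so that each connected component of the complement is simply connected and bounded by an oriented cycle (a unit cycle). The dimer algebra is $A=kQ/I$, $I$ generated by all $p-q$ with $p,q$ paths such that for some arrow $a$ both $pa$ and $qa$ are unit cycles. Perfect matching: $D\subseteq Q_1$ meeting each unit cycle in exactly one arrow; nondegenerate: every arrow in some perfect matching. Simple matching: perfect matching $D$ such that the subquiver with arrows $Q_1\setminus D$ contains a cycle through every vertex. Cancellative: no paths $p\neq q$ of $A$ and path $r$ with $rp=rq\neq0$ or $pr=qr\neq0$. For a dimer algebra $A'=kQ'/I'$ with simple matchings $\mathcal{S}'$, $\tau:A'\to M_{|Q'_0|}(k[x_D:D\in\mathcal{S}'])$ is the algebra map with $\tau(e_i)=E_{ii}$, $\tau(a)=\big(\prod_{D\in\mathcal{S}',a\in D}x_D\big)E_{\operatorname{h}(a),\operatorname{t}(a)}$; $\bar\tau(p)$ is given by $\tau(p)=\bar\tau(p)E_{ji}$ for $p\in e_jA'e_i$, extended $k$-linearly. A contraction $\psi:A\to A'$: $A'=kQ'/I'$ is a dimer algebra with $Q'$ obtained from $Q$ by contracting a set of arrows $Q_1^*\subseteq Q_1$ to vertices, the induced map $kQ\to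 kQ'$ sending $I$ into $I'$ and inducing $\psi$. It is cyclic if $A'$ is cancellative and $S:=k[\cup_{i\in Q_0}\bar\tau\psi(e_iAe_i)]=k[\cup_{i\in Q'_0}\bar\tau(e_iA'e_i)]$. $R:=k[\cap_{i\in Q_0}\bar\tau\psi(e_iAe_i)]$ (isomorphic to the center of the homotopy algebra of $A$). *)

theory Defs
  imports Main "HOL-Library.Poly_Mapping" "HOL-Computational_Algebra.Polynomial"
begin

definition alg_closed_field :: "'k::field itself \<Rightarrow> bool" where
  "alg_closed_field _ \<longleftrightarrow> (\<forall>p :: 'k poly. degree p \<noteq> 0 \<longrightarrow> (\<exists>x. poly p x = 0))"

text \<open>A quiver is given by a vertex set V, an arrow set E, head h and tail t.
  A path is a pair (start vertex, list of arrows in order of traversal);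
  trivial paths (s, []) are the idempotents e_s.\<close>

type_synonym ('v, 'a) path = "'v \<times> 'a list"

definition valid_path :: "'v set \<Rightarrow> 'a set \<Rightarrow> ('a \<Rightarrow> 'v) \<Rightarrow> ('a \<Rightarrow> 'v) \<Rightarrow> ('v, 'a) path \<Rightarrow> bool" where
  "valid_path V E h t p \<longleftrightarrow>
     fst p \<in> V \<and> set (snd p) \<subseteq> E \<and>
     (snd p \<noteq> [] \<longrightarrow> t (hd (snd p)) = fst p) \<and>
     (\<forall>i. Suc i < length (snd p) \<longrightarrow> t (snd p ! Suc i) = h (snd p ! i))"

definition pend :: "('a \<Rightarrow> 'v) \<Rightarrow> ('v, 'a) path \<Rightarrow> 'v" where
  "pend h p = (if snd p = [] then fst p else h (last (snd p)))"

text \<open>Composition p q of paths: first q, then p (right-to-left, as for tau).\<close>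
definition pcomp :: "('v, 'a) path \<Rightarrow> ('v, 'a) path \<Rightarrow> ('v, 'a) path" where
  "pcomp p q = (fst q, snd q @ snd p)"

definition path_vertices :: "('a \<Rightarrow> 'v) \<Rightarrow> ('v, 'a) path \<Rightarrow> 'v set" where
  "path_vertices h p = insert (fst p) (h ` set (snd p))"

definition pathalg :: "'v set \<Rightarrow> 'a set \<Rightarrow> ('a \<Rightarrow> 'v) \<Rightarrow> ('a \<Rightarrow> 'v) \<Rightarrow>
    'k itself \<Rightarrow> (('v, 'a) path \<Rightarrow>\<^sub>0 'k::field) set" where
  "pathalg V E h t _ = {x. \<forall>p\<in>Poly_Mapping.keys x. valid_path V E h t p}"

definition pa_mult :: "('a \<Rightarrow> 'v) \<Rightarrow> (('v, 'a) path \<Rightarrow>\<^sub>0 'k::field)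
    \<Rightarrow> (('v, 'a) path \<Rightarrow>\<^sub>0 'k) \<Rightarrow> (('v, 'a) path \<Rightarrow>\<^sub>0 'k)" where
  "pa_mult h x y =
     (\<Sum>p\<in>Poly_Mapping.keys x. \<Sum>q\<in>Poly_Mapping.keys y.
        if pend h q = fst p
        then Poly_Mapping.single (pcomp p q) (Poly_Mapping.lookup x p * Poly_Mapping.lookup y q)
        else 0)"

definition corner_elems :: "'v set \<Rightarrow> 'a set \<Rightarrow> ('a \<Rightarrow> 'v) \<Rightarrow> ('a \<Rightarrow> 'v) \<Rightarrow>
    'k itself \<Rightarrow> 'v \<Rightarrow> (('v, 'a) path \<Rightarrow>\<^sub>0 'k::field) set" where
  "corner_elems V E h t K i =
     {x \<in> pathalg V E h t K. \<forall>p\<in>Poly_Mapping.keys x. fst p = i \<and> pend h p = i}"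

text \<open>F is the set of unit cycles (boundaries of the faces), each given as the
  list of its arrows in order of traversal (starting at an arbitrary arrow).\<close>

definition und_edges :: "'a set \<Rightarrow> ('a \<Rightarrow> 'v) \<Rightarrow> ('a \<Rightarrow> 'v) \<Rightarrow> ('v \<times> 'v) set" where
  "und_edges E h t = {(t a, h a) | a. a \<in> E} \<union> {(h a, t a) | a. a \<in> E}"

text \<open>Darts at a vertex v: (a, True) for arrows with head v, (a, False) for arrows
  with tail v. A corner of a face joins the head-dart of an arrow with the
  tail-dart of the next arrow in the face.\<close>
definition darts :: "'a set \<Rightarrow> ('a \<Rightarrow> 'v) \<Rightarrow> ('a \<Rightarrow> 'v) \<Rightarrow> 'v \<Rightarrow> ('a \<times> bool) set" where
  "darts E h t v = {(a, True) | a. a \<in> E \<and> h a = v} \<union> {(a, False) | a. a \<in> E \<and> t a = v}"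

definition corners :: "'a list set \<Rightarrow> (('a \<times> bool) \<times> ('a \<times> bool)) set" where
  "corners F =
     {((f ! i, True), (f ! ((i + 1) mod length f), False)) | f i. f \<in> F \<and> i < length f}
   \<union> {((f ! ((i + 1) mod length f), False), (f ! i, True)) | f i. f \<in> F \<and> i < length f}"

definition dimer_quiver :: "'v set \<Rightarrow> 'a set \<Rightarrow> ('a \<Rightarrow> 'v) \<Rightarrow> ('a \<Rightarrow> 'v) \<Rightarrow> 'a list set \<Rightarrow> bool" where
  "dimer_quiver V E h t F \<longleftrightarrow>
     finite V \<and> finite E \<and> V \<noteq> {} \<and> (\<forall>a\<in>E. h a \<in> V \<and> t a \<in> V) \<and> finite F \<and>
     (\<forall>f\<in>F. f \<noteq> [] \<and> set f \<subseteq> E \<and> distinct f \<and>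
        (\<forall>i<length f. t (f ! ((i + 1) mod length f)) = h (f ! i))) \<and>
     (\<exists>Fp Fm. F = Fp \<union> Fm \<and> Fp \<inter> Fm = {} \<and>
        (\<forall>a\<in>E. (\<exists>!f. f \<in> Fp \<and> a \<in> set f) \<and> (\<exists>!f. f \<in> Fm \<and> a \<in> set f))) \<and>
     (\<forall>u\<in>V. \<forall>w\<in>V. (u, w) \<in> (und_edges E h t)\<^sup>*) \<and>
     (\<forall>v\<in>V. darts E h t v \<noteq> {} \<and>
        (\<forall>d1\<in>darts E h t v. \<forall>d2\<in>darts E h t v. (d1, d2) \<in> (corners F)\<^sup>*)) \<and>
     int (card V) - int (card E) + int (card F) = 0"

definition unit_cycle :: "'a list set \<Rightarrow> ('a \<Rightarrow> 'v) \<Rightarrow> ('v, 'a) path \<Rightarrow> bool" where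
  "unit_cycle F t p \<longleftrightarrow> snd p \<noteq> [] \<and> fst p = t (hd (snd p)) \<and>
     (\<exists>f\<in>F. \<exists>n. snd p = rotate n f)"

definition dimer_rel :: "'v set \<Rightarrow> 'a set \<Rightarrow> ('a \<Rightarrow> 'v) \<Rightarrow> ('a \<Rightarrow> 'v) \<Rightarrow> 'a list set \<Rightarrow>
    (('v, 'a) path \<times> ('v, 'a) path) set" where
  "dimer_rel V E h t F =
     {(p, q). \<exists>a\<in>E. valid_path V E h t p \<and> valid_path V E h t q \<and>
        fst p = h a \<and> fst q = h a \<and>
        unit_cycle F t (pcomp p (t a, [a])) \<and> unit_cycle F t (pcomp q (t a, [a]))}"

inductive_set dimer_ideal :: "'v set \<Rightarrow> 'a set \<Rightarrow> ('a \<Rightarrow> 'v) \<Rightarrow> ('a \<Rightarrow> 'v) \<Rightarrow> 'a list set \<Rightarrow>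
    'k itself \<Rightarrow> (('v, 'a) path \<Rightarrow>\<^sub>0 'k::field) set"
  for V E h t F K where
  zero: "0 \<in> dimer_ideal V E h t F K"
| gen: "(p, q) \<in> dimer_rel V E h t F \<Longrightarrow>
     Poly_Mapping.single p 1 - Poly_Mapping.single q 1 \<in> dimer_ideal V E h t F K"
| add: "x \<in> dimer_ideal V E h t F K \<Longrightarrow> y \<in> dimer_ideal V E h t F K \<Longrightarrow>
     x + y \<in> dimer_ideal V E h t F K"
| lmult: "x \<in> dimer_ideal V E h t F K \<Longrightarrow> valid_path V E h t u \<Longrightarrow>
     pa_mult h (Poly_Mapping.single u c) x \<in> dimer_ideal V E h t F K"
| rmult: "x \<in> dimer_ideal V E h t F K \<Longrightarrow> valid_path V E h t u \<Longrightarrow>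
     pa_mult h x (Poly_Mapping.single u c) \<in> dimer_ideal V E h t F K"

text \<open>Center Z of A, as the set of representatives in kQ.\<close>
definition dimer_center :: "'v set \<Rightarrow> 'a set \<Rightarrow> ('a \<Rightarrow> 'v) \<Rightarrow> ('a \<Rightarrow> 'v) \<Rightarrow> 'a list set \<Rightarrow>
    'k itself \<Rightarrow> (('v, 'a) path \<Rightarrow>\<^sub>0 'k::field) set" where
  "dimer_center V E h t F K =
     {z \<in> pathalg V E h t K. \<forall>x\<in>pathalg V E h t K.
        pa_mult h z x - pa_mult h x z \<in> dimer_ideal V E h t F K}"

definition fg_over_center :: "'v set \<Rightarrow> 'a set \<Rightarrow> ('a \<Rightarrow> 'v) \<Rightarrow> ('a \<Rightarrow> 'v) \<Rightarrow> 'a list set \<Rightarrow>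
    'k::field itself \<Rightarrow> bool" where
  "fg_over_center V E h t F K \<longleftrightarrow>
     (\<exists>B. finite B \<and> B \<subseteq> pathalg V E h t K \<and>
        (\<forall>x\<in>pathalg V E h t K. \<exists>c. (\<forall>b\<in>B. c b \<in> dimer_center V E h t F K) \<and>
           x - (\<Sum>b\<in>B. pa_mult h (c b) b) \<in> dimer_ideal V E h t F K))"

definition cancellative :: "'v set \<Rightarrow> 'a set \<Rightarrow> ('a \<Rightarrow> 'v) \<Rightarrow> ('a \<Rightarrow> 'v) \<Rightarrow> 'a list set \<Rightarrow>
    'k::field itself \<Rightarrow> bool" where
  "cancellative V E h t F K \<longleftrightarrow>
     \<not> (\<exists>p q r. valid_path V E h t p \<and> valid_path V E h t q \<and> valid_path V E h t r \<and>
        Poly_Mapping.single p (1::'k) - Poly_Mapping.single q 1 \<notin> dimer_ideal V E h t F K \<and>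
        ((pa_mult h (Poly_Mapping.single r 1) (Poly_Mapping.single p 1)
            - pa_mult h (Poly_Mapping.single r 1) (Poly_Mapping.single q 1) \<in> dimer_ideal V E h t F K \<and>
          pa_mult h (Poly_Mapping.single r 1) (Poly_Mapping.single p 1) \<notin> dimer_ideal V E h t F K)
        \<or>
         (pa_mult h (Poly_Mapping.single p 1) (Poly_Mapping.single r 1)
            - pa_mult h (Poly_Mapping.single q 1) (Poly_Mapping.single r 1) \<in> dimer_ideal V E h t F K \<and>
          pa_mult h (Poly_Mapping.single p 1) (Poly_Mapping.single r 1) \<notin> dimer_ideal V E h t F K)))"

definition perfect_matching :: "'a set \<Rightarrow> 'a list set \<Rightarrow> 'a set \<Rightarrow> bool" where
  "perfect_matching E F D \<longleftrightarrow> D \<subseteq> E \<and> (\<forall>f\<in>F. card (D \<inter> set f) = 1)"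

definition nondegenerate :: "'a set \<Rightarrow> 'a list set \<Rightarrow> bool" where
  "nondegenerate E F \<longleftrightarrow> (\<forall>a\<in>E. \<exists>D. perfect_matching E F D \<and> a \<in> D)"

definition simple_matching :: "'v set \<Rightarrow> 'a set \<Rightarrow> ('a \<Rightarrow> 'v) \<Rightarrow> ('a \<Rightarrow> 'v) \<Rightarrow> 'a list set \<Rightarrow>
    'a set \<Rightarrow> bool" where
  "simple_matching V E h t F D \<longleftrightarrow> perfect_matching E F D \<and>
     (\<exists>c. valid_path V (E - D) h t c \<and> snd c \<noteq> [] \<and> pend h c = fst c \<and>
        V \<subseteq> path_vertices h c)"

definition simple_matchings :: "'v set \<Rightarrow> 'a set \<Rightarrow> ('a \<Rightarrow> 'v) \<Rightarrow> ('a \<Rightarrow> 'v) \<Rightarrow> 'a list set \<Rightarrow>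
    'a set set" where
  "simple_matchings V E h t F = {D. simple_matching V E h t F D}"

text \<open>Polynomials in variables x_D (D a set of arrows) are poly_mappings from
  exponent vectors (poly_mappings from arrow sets to nat) to k.
  The exponent vector of a path p is that of the monomial
  prod over arrows a of p of prod_{D \<in> SM, a \<in> D} x_D.\<close>
definition tau_exp :: "'a set set \<Rightarrow> ('v, 'a) path \<Rightarrow> ('a set \<Rightarrow>\<^sub>0 nat)" where
  "tau_exp SM p =
     sum_list (map (\<lambda>a. \<Sum>D\<in>{D \<in> SM. a \<in> D}. Poly_Mapping.single D (1::nat)) (snd p))"

definition tau_bar :: "'a set set \<Rightarrow> (('v, 'a) path \<Rightarrow>\<^sub>0 'k::field)
    \<Rightarrow> (('a set \<Rightarrow>\<^sub>0 nat) \<Rightarrow>\<^sub>0 'k)" where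
  "tau_bar SM x = (\<Sum>p\<in>Poly_Mapping.keys x. Poly_Mapping.single (tau_exp SM p) (Poly_Mapping.lookup x p))"

definition contr_rel :: "'a set \<Rightarrow> ('a \<Rightarrow> 'v) \<Rightarrow> ('a \<Rightarrow> 'v) \<Rightarrow> ('v \<times> 'v) set" where
  "contr_rel Qs h t = {(h a, t a) | a. a \<in> Qs} \<union> {(t a, h a) | a. a \<in> Qs}"

definition is_contraction :: "'v set \<Rightarrow> 'a set \<Rightarrow> ('a \<Rightarrow> 'v) \<Rightarrow> ('a \<Rightarrow> 'v) \<Rightarrow>
    'w set \<Rightarrow> 'a set \<Rightarrow> ('a \<Rightarrow> 'w) \<Rightarrow> ('a \<Rightarrow> 'w) \<Rightarrow> ('v \<Rightarrow> 'w) \<Rightarrow> 'a set \<Rightarrow> bool" where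
  "is_contraction V E h t V' E' h' t' \<pi> Qs \<longleftrightarrow>
     Qs \<subseteq> E \<and> E' = E - Qs \<and> \<pi> ` V = V' \<and>
     (\<forall>a\<in>E'. h' a = \<pi> (h a) \<and> t' a = \<pi> (t a)) \<and>
     (\<forall>i\<in>V. \<forall>j\<in>V. \<pi> i = \<pi> j \<longleftrightarrow> (i, j) \<in> (contr_rel Qs h t)\<^sup>*)"

text \<open>The induced map kQ \<rightarrow> kQ': vertices go to their images, contracted arrows
  to the corresponding vertex idempotents, other arrows to themselves.\<close>
definition contr_path :: "('v \<Rightarrow> 'w) \<Rightarrow> 'a set \<Rightarrow> ('v, 'a) path \<Rightarrow> ('w, 'a) path" where
  "contr_path \<pi> Qs p = (\<pi> (fst p), filter (\<lambda>a. a \<notin> Qs) (snd p))"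

definition contr_map :: "('v \<Rightarrow> 'w) \<Rightarrow> 'a set \<Rightarrow> (('v, 'a) path \<Rightarrow>\<^sub>0 'k::field)
    \<Rightarrow> (('w, 'a) path \<Rightarrow>\<^sub>0 'k)" where
  "contr_map \<pi> Qs x =
     (\<Sum>p\<in>Poly_Mapping.keys x. Poly_Mapping.single (contr_path \<pi> Qs p) (Poly_Mapping.lookup x p))"

inductive_set k_subalg :: "(('d \<Rightarrow>\<^sub>0 nat) \<Rightarrow>\<^sub>0 'k::field) set \<Rightarrow> (('d \<Rightarrow>\<^sub>0 nat) \<Rightarrow>\<^sub>0 'k) set"
  for G where
  const: "Poly_Mapping.single 0 c \<in> k_subalg G"
| gen: "g \<in> G \<Longrightarrow> g \<in> k_subalg G"
| add: "x \<in> k_subalg G \<Longrightarrow> y \<in> k_subalg G \<Longrightarrow> x + y \<in> k_subalg G"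
| mult: "x \<in> k_subalg G \<Longrightarrow> y \<in> k_subalg G \<Longrightarrow> x * y \<in> k_subalg G"

definition taupsi_corner :: "'v set \<Rightarrow> 'a set \<Rightarrow> ('a \<Rightarrow> 'v) \<Rightarrow> ('a \<Rightarrow> 'v) \<Rightarrow>
    'w set \<Rightarrow> 'a set \<Rightarrow> ('a \<Rightarrow> 'w) \<Rightarrow> ('a \<Rightarrow> 'w) \<Rightarrow> 'a list set \<Rightarrow>
    ('v \<Rightarrow> 'w) \<Rightarrow> 'a set \<Rightarrow> 'k::field itself \<Rightarrow> 'v \<Rightarrow> (('a set \<Rightarrow>\<^sub>0 nat) \<Rightarrow>\<^sub>0 'k) set" where
  "taupsi_corner V E h t V' E' h' t' F' \<pi> Qs K i =
     (\<lambda>x. tau_bar (simple_matchings V' E' h' t' F') (contr_map \<pi> Qs x)) ` corner_elems V E h t K i"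

definition S_ring where
  "S_ring V E h t V' E' h' t' F' \<pi> Qs K =
     k_subalg (\<Union>i\<in>V. taupsi_corner V E h t V' E' h' t' F' \<pi> Qs K i)"

definition R_ring where
  "R_ring V E h t V' E' h' t' F' \<pi> Qs K =
     k_subalg (\<Inter>i\<in>V. taupsi_corner V E h t V' E' h' t' F' \<pi> Qs K i)"

definition cyclic_contraction :: "'v set \<Rightarrow> 'a set \<Rightarrow> ('a \<Rightarrow> 'v) \<Rightarrow> ('a \<Rightarrow> 'v) \<Rightarrow> 'a list set \<Rightarrow>
    'w set \<Rightarrow> 'a set \<Rightarrow> ('a \<Rightarrow> 'w) \<Rightarrow> ('a \<Rightarrow> 'w) \<Rightarrow> 'a list set \<Rightarrow>
    ('v \<Rightarrow> 'w) \<Rightarrow> 'a set \<Rightarrow> 'k::field itself \<Rightarrow> bool" where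
  "cyclic_contraction V E h t F V' E' h' t' F' \<pi> Qs K \<longleftrightarrow>
     dimer_quiver V' E' h' t' F' \<and>
     is_contraction V E h t V' E' h' t' \<pi> Qs \<and>
     contr_map \<pi> Qs ` dimer_ideal V E h t F K \<subseteq> dimer_ideal V' E' h' t' F' K \<and>
     cancellative V' E' h' t' F' K \<and>
     S_ring V E h t V' E' h' t' F' \<pi> Qs K =
       k_subalg (\<Union>j\<in>V'. tau_bar (simple_matchings V' E' h' t' F') ` corner_elems V' E' h' t' K j)"

definition fg_module :: "('b::comm_ring_1) set \<Rightarrow> 'b set \<Rightarrow> bool" where
  "fg_module R M \<longleftrightarrow>
     (\<exists>B. finite B \<and> B \<subseteq> M \<and> (\<forall>s\<in>M. \<exists>c. (\<forall>b\<in>B. c b \<in> R) \<and> s = (\<Sum>b\<in>B. c b * b)))"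

end

theory Submission
  imports Defs "HOL-Library.FuncSet"
begin

definition Mf :: "('p \<Rightarrow> 'k::zero \<Rightarrow> 'r::comm_monoid_add) \<Rightarrow> ('p \<Rightarrow>\<^sub>0 'k) \<Rightarrow> 'r" where
  "Mf f x = (\<Sum>p\<in>Poly_Mapping.keys x. f p (Poly_Mapping.lookup x p))"

definition linf :: "('p \<Rightarrow> 'k::ring \<Rightarrow> 'r::ab_group_add) \<Rightarrow> bool" where
  "linf f \<longleftrightarrow> (\<forall>p a b. f p (a + b) = f p a + f p b)"

lemma linf_zero: "linf f \<Longrightarrow> f p 0 = 0"
  unfolding linf_def by (metis add.right_neutral add_left_cancel)

lemma linf_minus: "linf f \<Longrightarrow> f p (- a) = - f p a"
  unfolding linf_def by (metis add.right_inverse eq_neg_iff_add_eq_0 linf_def linf_zero)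

lemma Mf_super:
  assumes "linf f" "finite S" "Poly_Mapping.keys x \<subseteq> S"
  shows "Mf f x = (\<Sum>p\<in>S. f p (Poly_Mapping.lookup x p))"
  unfolding Mf_def
  by (rule sum.mono_neutral_left) (use assms in \<open>auto simp: linf_zero in_keys_iff\<close>)

lemma Mf_add:
  assumes "linf f" shows "Mf f (x + y) = Mf f x + Mf f y"
proof -
  let ?S = "Poly_Mapping.keys x \<union> Poly_Mapping.keys y"
  have "Mf f (x + y) = (\<Sum>p\<in>?S. f p (Poly_Mapping.lookup (x+y) p))"
    by (rule Mf_super[OF assms]) (auto simp: keys_add)
  also have "\<dots> = (\<Sum>p\<in>?S. f p (Poly_Mapping.lookup x p)) + (\<Sum>p\<in>?S. f p (Poly_Mapping.lookup y p))"
    using assms by (simp add: lookup_add linf_def sum.distrib)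
  also have "\<dots> = Mf f x + Mf f y"
    by (simp add: Mf_super[OF assms, of ?S])
  finally show ?thesis .
qed

lemma Mf_zero [simp]: "Mf f 0 = 0"
  by (simp add: Mf_def)

lemma Mf_uminus:
  assumes "linf f" shows "Mf f (- x) = - Mf f x"
  by (metis Mf_add Mf_zero add.right_inverse assms minus_unique)

lemma Mf_diff:
  assumes "linf f" shows "Mf f (x - y) = Mf f x - Mf f y"
  by (metis Mf_add Mf_uminus assms diff_conv_add_uminus)

lemma Mf_sum:
  assumes "linf f" shows "Mf f (\<Sum>i\<in>I. F i) = (\<Sum>i\<in>I. Mf f (F i))"
  by (induction I rule: infinite_finite_induct) (simp_all add: Mf_add[OF assms])

lemma Mf_single:
  assumes "linf f" shows "Mf f (Poly_Mapping.single p v) = f p v"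
  using assms by (cases "v = 0") (simp_all add: Mf_def linf_zero)

lemma Mf_if:
  assumes "linf f" shows "Mf f (if b then x else 0) = (if b then Mf f x else 0)"
  by simp

definition Phi :: "('a \<Rightarrow> 'v) \<Rightarrow> (('v,'a) path \<Rightarrow> 'm::comm_monoid_add) \<Rightarrow> 'v \<Rightarrow> 'v
   \<Rightarrow> (('v,'a) path \<Rightarrow>\<^sub>0 'k::comm_ring_1) \<Rightarrow> ('m \<Rightarrow>\<^sub>0 'k)" where
  "Phi h g s e = Mf (\<lambda>p v. if fst p = s \<and> pend h p = e then Poly_Mapping.single (g p) v else 0)"

definition Lg :: "('p \<Rightarrow> 'm) \<Rightarrow> ('p \<Rightarrow>\<^sub>0 'k::comm_ring_1) \<Rightarrow> ('m \<Rightarrow>\<^sub>0 'k)" where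
  "Lg g = Mf (\<lambda>p v. Poly_Mapping.single (g p) v)"

lemma linf_Phi: "linf (\<lambda>p v. if fst p = s \<and> pend h p = e then Poly_Mapping.single (g p) v else 0)"
  by (auto simp: linf_def single_add)

lemma linf_Lg: "linf (\<lambda>p v. Poly_Mapping.single (g p) v)"
  by (simp add: linf_def single_add)

lemma Phi_add: "Phi h g s e (x + y) = Phi h g s e x + Phi h g s e y"
  unfolding Phi_def by (rule Mf_add[OF linf_Phi])
lemma Phi_diff: "Phi h g s e (x - y) = Phi h g s e x - Phi h g s e y"
  unfolding Phi_def by (rule Mf_diff[OF linf_Phi])
lemma Phi_sum: "Phi h g s e (\<Sum>i\<in>I. F i) = (\<Sum>i\<in>I. Phi h g s e (F i))"
  unfolding Phi_def by (rule Mf_sum[OF linf_Phi])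
lemma Phi_single: "Phi h g s e (Poly_Mapping.single p v) =
    (if fst p = s \<and> pend h p = e then Poly_Mapping.single (g p) v else 0)"
  unfolding Phi_def by (rule Mf_single[OF linf_Phi])
lemma Lg_add: "Lg g (x + y) = Lg g x + Lg g y"
  unfolding Lg_def by (rule Mf_add[OF linf_Lg])
lemma Lg_diff: "Lg g (x - y) = Lg g x - Lg g y"
  unfolding Lg_def by (rule Mf_diff[OF linf_Lg])
lemma Lg_sum: "Lg g (\<Sum>i\<in>I. F i) = (\<Sum>i\<in>I. Lg g (F i))"
  unfolding Lg_def by (rule Mf_sum[OF linf_Lg])
lemma Lg_single: "Lg g (Poly_Mapping.single p v) = Poly_Mapping.single (g p) v"
  unfolding Lg_def by (rule Mf_single[OF linf_Lg])

lemma Phi_zero [simp]: "Phi h g s e 0 = 0" by (simp add: Phi_def)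
lemma Lg_zero [simp]: "Lg g 0 = 0" by (simp add: Lg_def)

lemma Lg_Lg: "Lg a (Lg b x) = Lg (a \<circ> b) x"
proof -
  have "Lg a (Lg b x) = (\<Sum>p\<in>Poly_Mapping.keys x. Lg a (Poly_Mapping.single (b p) (Poly_Mapping.lookup x p)))"
    by (subst Lg_def[of b]) (simp add: Mf_def Lg_sum)
  also have "\<dots> = Lg (a \<circ> b) x"
    by (simp add: Lg_single) (simp add: Lg_def Mf_def)
  finally show ?thesis .
qed

lemma tau_bar_Lg: "tau_bar SM = Lg (tau_exp SM)"
  by (simp add: fun_eq_iff tau_bar_def Lg_def Mf_def)

lemma contr_map_Lg: "contr_map \<pi> Qs = Lg (contr_path \<pi> Qs)"
  by (simp add: fun_eq_iff contr_map_def Lg_def Mf_def)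


lemma fst_pcomp [simp]: "fst (pcomp p q) = fst q"
  by (simp add: pcomp_def)

lemma pend_pcomp: "pend h q = fst p \<Longrightarrow> pend h (pcomp p q) = pend h p"
  by (auto simp: pend_def pcomp_def)

lemma Mf_pa_mult:
  assumes "linf f"
  shows "Mf f (pa_mult h x y) = (\<Sum>p\<in>Poly_Mapping.keys x. \<Sum>q\<in>Poly_Mapping.keys y.
     if pend h q = fst p then f (pcomp p q) (Poly_Mapping.lookup x p * Poly_Mapping.lookup y q) else 0)"
  unfolding pa_mult_def
  by (simp add: Mf_sum[OF assms] Mf_single[OF assms] if_distrib[of "Mf f"] cong: if_cong)

lemma Phi_mult:
  fixes g :: "('v,'a) path \<Rightarrow> 'm::comm_monoid_add"
  assumes gadd: "\<And>p q. g (pcomp p q) = g q + g p" and U: "finite U" "fst ` Poly_Mapping.keys x \<subseteq> U"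
  shows "Phi h g s e (pa_mult h x (y :: ('v,'a) path \<Rightarrow>\<^sub>0 'k::field)) = (\<Sum>k\<in>U. Phi h g k e x * Phi h g s k y)"
proof -
  let ?Kx = "Poly_Mapping.keys x" and ?Ky = "Poly_Mapping.keys y"
  let ?X = "\<lambda>p q. Poly_Mapping.single (g p + g q) (Poly_Mapping.lookup x p * Poly_Mapping.lookup y q)"
  have "Phi h g s e (pa_mult h x y) = (\<Sum>p\<in>?Kx. \<Sum>q\<in>?Ky.
      if pend h q = fst p \<and> fst q = s \<and> pend h p = e then ?X p q else 0)"
    unfolding Phi_def Mf_pa_mult[OF linf_Phi]
    by (intro sum.cong refl) (auto simp: pend_pcomp gadd add.commute)
  also have "\<dots> = (\<Sum>p\<in>?Kx. \<Sum>q\<in>?Ky. \<Sum>k\<in>U.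
      if fst p = k \<and> pend h p = e \<and> fst q = s \<and> pend h q = k then ?X p q else 0)"
  proof (intro sum.cong refl)
    fix p q assume p: "p \<in> ?Kx"
    then have "fst p \<in> U" using U by auto
    then show "(if pend h q = fst p \<and> fst q = s \<and> pend h p = e then ?X p q else 0) =
      (\<Sum>k\<in>U. if fst p = k \<and> pend h p = e \<and> fst q = s \<and> pend h q = k then ?X p q else 0)"
    proof -
      have eq: "(\<lambda>k. if fst p = k \<and> pend h p = e \<and> fst q = s \<and> pend h q = k then ?X p q else 0) =
        (\<lambda>k. if k = fst p then (if pend h q = fst p \<and> fst q = s \<and> pend h p = e then ?X p q else 0) else 0)"
        by (auto simp: fun_eq_iff)
      show ?thesis by (subst eq, subst sum.delta[OF U(1)], simp add: \<open>fst p \<in> U\<close>)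
    qed
  qed
  also have "\<dots> = (\<Sum>p\<in>?Kx. \<Sum>k\<in>U. \<Sum>q\<in>?Ky.
      if fst p = k \<and> pend h p = e \<and> fst q = s \<and> pend h q = k then ?X p q else 0)"
    by (intro sum.cong refl, rule sum.swap)
  also have "\<dots> = (\<Sum>k\<in>U. \<Sum>p\<in>?Kx. \<Sum>q\<in>?Ky.
      if fst p = k \<and> pend h p = e \<and> fst q = s \<and> pend h q = k then ?X p q else 0)"
    by (rule sum.swap)
  also have "\<dots> = (\<Sum>k\<in>U. Phi h g k e x * Phi h g s k y)"
    unfolding Phi_def Mf_def sum_product
    by (intro sum.cong refl) (auto simp: mult_single)
  finally show ?thesis .
qed


lemma tau_exp_pcomp: "tau_exp SM (pcomp p q) = tau_exp SM q + tau_exp SM p"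
  by (simp add: tau_exp_def pcomp_def)

lemma sum_single_const: "(\<Sum>a\<in>A. Poly_Mapping.single D (f a)) = Poly_Mapping.single D (sum f A)"
  by (induction A rule: infinite_finite_induct) (simp_all add: single_add)

lemma uc_exp:
  assumes dq: "dimer_quiver V E h t F" and SM: "\<forall>D\<in>SM. perfect_matching E F D"
    and uc: "unit_cycle F t r"
  shows "tau_exp SM r = (\<Sum>D\<in>SM. Poly_Mapping.single D (1::nat))"
proof -
  from uc obtain f n where f: "f \<in> F" "snd r = rotate n f" by (auto simp: unit_cycle_def)
  from dq f have dist: "distinct f" and fE: "set f \<subseteq> E" and finE: "finite E"
    by (auto simp: dimer_quiver_def)
  have finSM: "finite SM"
    by (rule finite_subset[of _ "Pow E"]) (use SM finE in \<open>auto simp: perfect_matching_def\<close>)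
  let ?G = "\<lambda>a. \<Sum>D\<in>{D \<in> SM. a \<in> D}. Poly_Mapping.single D (1::nat)"
  have "tau_exp SM r = sum ?G (set f)"
    unfolding tau_exp_def f(2)
    by (subst sum_list_distinct_conv_sum_set) (simp_all add: dist)
  also have "\<dots> = (\<Sum>a\<in>set f. \<Sum>D\<in>SM. if a \<in> D then Poly_Mapping.single D (1::nat) else 0)"
    using finSM by (simp only: sum.inter_filter)
  also have "\<dots> = (\<Sum>D\<in>SM. \<Sum>a\<in>set f. if a \<in> D then Poly_Mapping.single D (1::nat) else 0)"
    by (rule sum.swap)
  also have "\<dots> = (\<Sum>D\<in>SM. Poly_Mapping.single D (1::nat))"
  proof (intro sum.cong refl)
    fix D assume "D \<in> SM"
    then have c: "card (D \<inter> set f) = 1" using SM f(1) by (auto simp: perfect_matching_def)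
    have "(\<Sum>a\<in>set f. if a \<in> D then Poly_Mapping.single D (1::nat) else 0)
        = (\<Sum>a\<in>{a \<in> set f. a \<in> D}. Poly_Mapping.single D (1::nat))"
      by (simp only: sum.inter_filter finite_set)
    also have "\<dots> = Poly_Mapping.single D (card {a \<in> set f. a \<in> D})"
      by (simp add: sum_single_const)
    also have "{a \<in> set f. a \<in> D} = D \<inter> set f" by auto
    finally show "(\<Sum>a\<in>set f. if a \<in> D then Poly_Mapping.single D (1::nat) else 0) = Poly_Mapping.single D 1"
      using c by simp
  qed
  finally show ?thesis .
qed

lemma uc_last:
  assumes dq: "dimer_quiver V E h t F" and uc: "unit_cycle F t (pcomp p (t a, [a]))"
  shows "h (last (a # snd p)) = t a"
proof -
  from uc obtain f n where f: "f \<in> F" "a # snd p = rotate n f"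
    by (auto simp: unit_cycle_def pcomp_def)
  from dq f(1) have fne: "f \<noteq> []" and adj: "\<forall>i<length f. t (f ! ((i + 1) mod length f)) = h (f ! i)"
    by (auto simp: dimer_quiver_def)
  define L where "L = length f"
  have L: "L > 0" using fne by (simp add: L_def)
  have len: "length (a # snd p) = L" using f(2) by (simp add: L_def)
  have "a = (a # snd p) ! 0" by simp
  also have "\<dots> = f ! ((n + 0) mod L)" using f(2) L by (simp add: nth_rotate L_def)
  finally have ha: "a = f ! (n mod L)" by simp
  have "last (a # snd p) = (a # snd p) ! (L - 1)" using len by (metis last_conv_nth list.distinct(1))
  also have "\<dots> = f ! ((n + (L - 1)) mod L)" using f(2) L len by (simp add: nth_rotate L_def)
  finally have hl: "last (a # snd p) = f ! ((n + (L - 1)) mod L)" .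
  have i: "(n + (L - 1)) mod L < L" using L by simp
  have "((n + (L - 1)) mod L + 1) mod L = n mod L"
    using L by (metis Suc_pred' add_Suc_right mod_Suc_eq mod_add_self2 Suc_eq_plus1)
  then show ?thesis using adj i ha hl unfolding L_def by metis
qed


lemma uc_pend:
  assumes dq: "dimer_quiver V E h t F" and uc: "unit_cycle F t (pcomp p (t a, [a]))"
    and fp: "fst p = h a"
  shows "pend h p = t a"
  using uc_last[OF dq uc] fp by (cases "snd p = []") (auto simp: pend_def)

lemma ideal_Phi_zero:
  assumes dq: "dimer_quiver V E h t F" and SM: "\<forall>D\<in>SM. perfect_matching E F D"
    and z: "z \<in> dimer_ideal V E h t F K"
  shows "\<forall>s e. Phi h (tau_exp SM) s e z = 0"
  using z
proof (induction rule: dimer_ideal.induct)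
  case zero
  then show ?case by simp
next
  case (gen p q)
  then obtain a where a: "a \<in> E" "fst p = h a" "fst q = h a"
    "unit_cycle F t (pcomp p (t a, [a]))" "unit_cycle F t (pcomp q (t a, [a]))"
    by (auto simp: dimer_rel_def)
  have pp: "pend h p = t a" by (rule uc_pend[OF dq a(4) a(2)])
  have pq: "pend h q = t a" by (rule uc_pend[OF dq a(5) a(3)])
  have "tau_exp SM (t a, [a]) + tau_exp SM p = tau_exp SM (t a, [a]) + tau_exp SM q"
    using uc_exp[OF dq SM a(4)] uc_exp[OF dq SM a(5)] by (simp add: tau_exp_pcomp)
  then have ex: "tau_exp SM p = tau_exp SM q" by simp
  show ?case using pp pq ex a(2,3) by (simp add: Phi_diff Phi_single)
next
  case (add x y)
  then show ?case by (simp add: Phi_add)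
next
  case (lmult x u c)
  show ?case
  proof (intro allI)
    fix s e
    have "Phi h (tau_exp SM) s e (pa_mult h (Poly_Mapping.single u c) x) =
      (\<Sum>k\<in>{fst u}. Phi h (tau_exp SM) k e (Poly_Mapping.single u c) * Phi h (tau_exp SM) s k x)"
      by (rule Phi_mult) (auto simp: tau_exp_pcomp)
    then show "Phi h (tau_exp SM) s e (pa_mult h (Poly_Mapping.single u c) x) = 0"
      using lmult.IH by simp
  qed
next
  case (rmult x u c)
  show ?case
  proof (intro allI)
    fix s e
    have "Phi h (tau_exp SM) s e (pa_mult h x (Poly_Mapping.single u c)) =
      (\<Sum>k\<in>fst ` Poly_Mapping.keys x. Phi h (tau_exp SM) k e x * Phi h (tau_exp SM) s k (Poly_Mapping.single u c))"
      by (rule Phi_mult) (auto simp: tau_exp_pcomp)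
    then show "Phi h (tau_exp SM) s e (pa_mult h x (Poly_Mapping.single u c)) = 0"
      using rmult.IH by simp
  qed
qed

lemma Lg_decomp:
  assumes "finite A" "fst ` Poly_Mapping.keys z \<subseteq> A" "pend h ` Poly_Mapping.keys z \<subseteq> A"
  shows "Lg g z = (\<Sum>s\<in>A. \<Sum>e\<in>A. Phi h g s e z)"
proof -
  have "(\<Sum>s\<in>A. \<Sum>e\<in>A. Phi h g s e z) = (\<Sum>s\<in>A. \<Sum>e\<in>A. \<Sum>p\<in>Poly_Mapping.keys z.
      if fst p = s \<and> pend h p = e then Poly_Mapping.single (g p) (Poly_Mapping.lookup z p) else 0)"
    by (simp add: Phi_def Mf_def)
  also have "\<dots> = (\<Sum>s\<in>A. \<Sum>p\<in>Poly_Mapping.keys z. \<Sum>e\<in>A.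
      if fst p = s \<and> pend h p = e then Poly_Mapping.single (g p) (Poly_Mapping.lookup z p) else 0)"
    by (intro sum.cong refl, rule sum.swap)
  also have "\<dots> = (\<Sum>p\<in>Poly_Mapping.keys z. \<Sum>s\<in>A. \<Sum>e\<in>A.
      if fst p = s \<and> pend h p = e then Poly_Mapping.single (g p) (Poly_Mapping.lookup z p) else 0)"
    by (rule sum.swap)
  also have "\<dots> = (\<Sum>p\<in>Poly_Mapping.keys z. Poly_Mapping.single (g p) (Poly_Mapping.lookup z p))"
  proof (intro sum.cong refl)
    fix p assume p: "p \<in> Poly_Mapping.keys z"
    then have in1: "fst p \<in> A" and in2: "pend h p \<in> A" using assms by auto
    have eq: "\<And>s. (\<lambda>e. if fst p = s \<and> pend h p = e then Poly_Mapping.single (g p) (Poly_Mapping.lookup z p) else 0)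
      = (\<lambda>e. if e = pend h p then (if fst p = s then Poly_Mapping.single (g p) (Poly_Mapping.lookup z p) else 0) else 0)"
      by (auto simp: fun_eq_iff)
    have eq2: "(\<lambda>s. if fst p = s then Poly_Mapping.single (g p) (Poly_Mapping.lookup z p) else 0)
      = (\<lambda>s. if s = fst p then Poly_Mapping.single (g p) (Poly_Mapping.lookup z p) else 0)"
      by (auto simp: fun_eq_iff)
    show "(\<Sum>s\<in>A. \<Sum>e\<in>A. if fst p = s \<and> pend h p = e then Poly_Mapping.single (g p) (Poly_Mapping.lookup z p) else 0)
      = Poly_Mapping.single (g p) (Poly_Mapping.lookup z p)"
      apply (subst eq)
      apply (subst sum.delta[OF assms(1)])
      apply (simp only: in2 if_True)
      apply (subst eq2)
      apply (subst sum.delta[OF assms(1)])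
      apply (simp only: in1 if_True)
      done
  qed
  also have "\<dots> = Lg g z" by (simp add: Lg_def Mf_def)
  finally show ?thesis by simp
qed


lemma Phi_e:
  assumes "g (v, []) = 0"
  shows "Phi h g s k (Poly_Mapping.single (v, []) 1) = (if s = v \<and> k = v then 1 else 0)"
  using assms by (auto simp: Phi_single pend_def)

lemma sum_delta2:
  assumes "finite A" "s \<in> A" "e \<in> A"
  shows "(\<Sum>a\<in>A. \<Sum>b\<in>A. if a = s \<and> b = e then X else 0) = X"
proof -
  have "\<And>a. (\<Sum>b\<in>A. if a = s \<and> b = e then X else 0) = (if a = s then X else 0)"
  proof -
    fix a
    have "(\<lambda>b. if a = s \<and> b = e then X else 0) = (\<lambda>b. if b = e then (if a = s then X else 0) else 0)"
      by (auto simp: fun_eq_iff)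
    then show "(\<Sum>b\<in>A. if a = s \<and> b = e then X else 0) = (if a = s then X else 0)"
      using assms by (simp add: sum.delta)
  qed
  then show ?thesis using assms by (simp add: sum.delta)
qed

lemma Phi_restr:
  fixes g :: "('v,'a) path \<Rightarrow> 'm::comm_monoid_add" and y :: "('v,'a) path \<Rightarrow>\<^sub>0 'k::field"
  assumes gadd: "\<And>p q. g (pcomp p q) = g q + g p" and g0: "\<And>v. g (v, []) = 0"
  shows "Phi h g a b (pa_mult h (Poly_Mapping.single (e, []) 1) (pa_mult h y (Poly_Mapping.single (s, []) 1)))
    = (if a = s \<and> b = e then Phi h g s e y else 0)"
proof -
  let ?U = "insert s (fst ` Poly_Mapping.keys y)"
  have 1: "Phi h g a e (pa_mult h y (Poly_Mapping.single (s, []) 1)) =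
      (\<Sum>k\<in>?U. Phi h g k e y * Phi h g a k (Poly_Mapping.single (s, []) 1))"
    by (rule Phi_mult[OF gadd]) auto
  also have "\<dots> = (\<Sum>k\<in>?U. if k = s then (if a = s then Phi h g s e y else 0) else 0)"
    by (intro sum.cong refl) (auto simp: Phi_e g0)
  also have "\<dots> = (if a = s then Phi h g s e y else 0)"
    by (simp add: sum.delta)
  finally have A: "Phi h g a e (pa_mult h y (Poly_Mapping.single (s, []) 1)) = (if a = s then Phi h g s e y else 0)" .
  have "Phi h g a b (pa_mult h (Poly_Mapping.single (e, []) 1) (pa_mult h y (Poly_Mapping.single (s, []) 1)))
    = (\<Sum>k\<in>{e}. Phi h g k b (Poly_Mapping.single (e, []) 1) * Phi h g a k (pa_mult h y (Poly_Mapping.single (s, []) 1)))"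
    by (rule Phi_mult[OF gadd]) auto
  also have "\<dots> = (if a = s \<and> b = e then Phi h g s e y else 0)"
    using A by (simp add: Phi_e g0)
  finally show ?thesis .
qed

lemma pm_expand: "w = (\<Sum>q\<in>Poly_Mapping.keys w. Poly_Mapping.single q (Poly_Mapping.lookup w q))"
proof (rule poly_mapping_eqI)
  fix k
  show "Poly_Mapping.lookup w k = Poly_Mapping.lookup (\<Sum>q\<in>Poly_Mapping.keys w. Poly_Mapping.single q (Poly_Mapping.lookup w q)) k"
    by (simp add: lookup_sum lookup_single when_def in_keys_iff)
qed

lemma single_mult_cancel:
  fixes w :: "'m::cancel_comm_monoid_add \<Rightarrow>\<^sub>0 'k::field"
  assumes "Poly_Mapping.single m 1 * w = 0"
  shows "w = 0"
proof (rule poly_mapping_eqI)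
  fix k
  have "Poly_Mapping.single m 1 * w = (\<Sum>q\<in>Poly_Mapping.keys w. Poly_Mapping.single (m + q) (Poly_Mapping.lookup w q))"
    by (subst pm_expand[of w]) (simp add: sum_distrib_left mult_single)
  then have "0 = Poly_Mapping.lookup (\<Sum>q\<in>Poly_Mapping.keys w. Poly_Mapping.single (m + q) (Poly_Mapping.lookup w q)) (m + k)"
    using assms by simp
  also have "\<dots> = (\<Sum>q\<in>Poly_Mapping.keys w. if q = k then Poly_Mapping.lookup w q else 0)"
    by (simp add: lookup_sum lookup_single when_def)
  also have "\<dots> = Poly_Mapping.lookup w k"
    by (simp add: sum.delta in_keys_iff)
  finally show "Poly_Mapping.lookup w k = Poly_Mapping.lookup 0 k" by simp
qed

lemma keys_pa_mult:
  "Poly_Mapping.keys (pa_mult h x y) \<subseteq>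
     {pcomp p q | p q. p \<in> Poly_Mapping.keys x \<and> q \<in> Poly_Mapping.keys y \<and> pend h q = fst p}"
proof -
  have "Poly_Mapping.keys (pa_mult h x y) \<subseteq> (\<Union>p\<in>Poly_Mapping.keys x. \<Union>q\<in>Poly_Mapping.keys y.
     Poly_Mapping.keys (if pend h q = fst p
        then Poly_Mapping.single (pcomp p q) (Poly_Mapping.lookup x p * Poly_Mapping.lookup y q) else 0))"
    unfolding pa_mult_def
    by (rule order.trans[OF keys_sum]) (intro UN_mono order.refl keys_sum)
  also have "\<dots> \<subseteq> {pcomp p q | p q. p \<in> Poly_Mapping.keys x \<and> q \<in> Poly_Mapping.keys y \<and> pend h q = fst p}"
  proof (intro UN_least subsetI)
    fix p q r assume pq: "p \<in> Poly_Mapping.keys x" "q \<in> Poly_Mapping.keys y" and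
      r: "r \<in> Poly_Mapping.keys (if pend h q = fst p
        then Poly_Mapping.single (pcomp p q) (Poly_Mapping.lookup x p * Poly_Mapping.lookup y q) else 0)"
    then show "r \<in> {pcomp p q | p q. p \<in> Poly_Mapping.keys x \<and> q \<in> Poly_Mapping.keys y \<and> pend h q = fst p}"
    proof -
      from r have "r = pcomp p q \<and> pend h q = fst p" by (auto split: if_splits)
      then show ?thesis using pq by blast
    qed
  qed
  finally show ?thesis .
qed

lemma valid_pcomp:
  assumes p: "valid_path V E h t p" and q: "valid_path V E h t q" and c: "pend h q = fst p"
  shows "valid_path V E h t (pcomp p q)"
proof -
  obtain v1 l1 where pq: "q = (v1, l1)" by (cases q)
  obtain v2 l2 where pp: "p = (v2, l2)" by (cases p)
  have q1: "v1 \<in> V" "set l1 \<subseteq> E" "l1 \<noteq> [] \<longrightarrow> t (hd l1) = v1"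
    "\<And>i. Suc i < length l1 \<Longrightarrow> t (l1 ! Suc i) = h (l1 ! i)"
    using q unfolding pq valid_path_def by auto
  have p1: "v2 \<in> V" "set l2 \<subseteq> E" "l2 \<noteq> [] \<longrightarrow> t (hd l2) = v2"
    "\<And>i. Suc i < length l2 \<Longrightarrow> t (l2 ! Suc i) = h (l2 ! i)"
    using p unfolding pp valid_path_def by auto
  have c1: "(if l1 = [] then v1 else h (last l1)) = v2"
    using c unfolding pq pp pend_def by (cases "l1 = []") auto
  have hd: "l1 @ l2 \<noteq> [] \<longrightarrow> t (hd (l1 @ l2)) = v1"
  proof (cases "l1 = []")
    case True
    then show ?thesis using p1(3) c1 by simp
  next
    case False
    then show ?thesis using q1(3) by simp
  qed
  have cons: "t ((l1 @ l2) ! Suc i) = h ((l1 @ l2) ! i)" if i: "Suc i < length (l1 @ l2)" for i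
  proof -
    consider (a) "Suc i < length l1" | (b) "Suc i = length l1" | (c) "Suc i > length l1" by linarith
    then show ?thesis
    proof cases
      case a
      then show ?thesis using q1(4)[OF a] by (simp add: nth_append)
    next
      case b
      then have l1ne: "l1 \<noteq> []" by auto
      have l2ne: "l2 \<noteq> []" using i b by auto
      have "(l1 @ l2) ! Suc i = hd l2" using b l2ne by (simp add: nth_append hd_conv_nth)
      moreover have "(l1 @ l2) ! i = last l1"
      proof -
        have "i = length l1 - 1" using b by simp
        then show ?thesis using b l1ne by (simp add: nth_append last_conv_nth)
      qed
      ultimately show ?thesis using p1(3) c1 l1ne l2ne by simp
    next
      case c
      then have ge: "length l1 \<le> i" by simp
      have "Suc (i - length l1) < length l2" using i c by simp
      then have "t (l2 ! Suc (i - length l1)) = h (l2 ! (i - length l1))" by (rule p1(4))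
      moreover have "Suc i - length l1 = Suc (i - length l1)" using ge by simp
      ultimately show ?thesis using ge c by (simp add: nth_append)
    qed
  qed
  show ?thesis
    unfolding pq pp valid_path_def pcomp_def
    using q1(1,2) p1(2) hd cons by auto
qed

lemma valid_e: "i \<in> V \<Longrightarrow> valid_path V E h t (i, [])"
  by (simp add: valid_path_def)

lemma pathalg_single: "valid_path V E h t p \<Longrightarrow> Poly_Mapping.single p c \<in> pathalg V E h t K"
  by (simp add: pathalg_def)

lemma pathalg_fst: "w \<in> pathalg V E h t K \<Longrightarrow> fst ` Poly_Mapping.keys w \<subseteq> V"
  by (auto simp: pathalg_def valid_path_def)

lemma corner_Lg:
  assumes "x \<in> corner_elems V E h t K i"
  shows "Lg g x = Phi h g i i x"
  using assms unfolding Lg_def Phi_def Mf_def corner_elems_def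
  by (intro sum.cong refl) auto

lemma restr_corner:
  fixes K :: "'k::field itself"
  assumes w: "w \<in> pathalg V E h t K" and i: "i \<in> V"
  shows "pa_mult h (Poly_Mapping.single (i, []) 1) (pa_mult h w (Poly_Mapping.single (i, []) 1))
     \<in> corner_elems V E h t K i"
proof -
  have "\<forall>r\<in>Poly_Mapping.keys (pa_mult h (Poly_Mapping.single (i, []) (1::'k)) (pa_mult h w (Poly_Mapping.single (i, []) 1))).
      r \<in> Poly_Mapping.keys w \<and> fst r = i \<and> pend h r = i"
  proof
    fix r assume "r \<in> Poly_Mapping.keys (pa_mult h (Poly_Mapping.single (i, []) (1::'k)) (pa_mult h w (Poly_Mapping.single (i, []) 1)))"
    then obtain q where q: "q \<in> Poly_Mapping.keys (pa_mult h w (Poly_Mapping.single (i, []) (1::'k)))"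
      "r = pcomp (i, []) q" "pend h q = i"
      using keys_pa_mult[of h "Poly_Mapping.single (i, []) (1::'k)"] by fastforce
    then obtain p where p: "p \<in> Poly_Mapping.keys w" "q = pcomp p (i, [])" "i = fst p"
      using keys_pa_mult[of h w "Poly_Mapping.single (i, []) (1::'k)"] by (fastforce simp: pend_def)
    have "q = p" using p by (cases p) (simp add: pcomp_def)
    moreover have "r = q" using q by (cases q) (simp add: pcomp_def)
    ultimately show "r \<in> Poly_Mapping.keys w \<and> fst r = i \<and> pend h r = i" using p q by simp
  qed
  then show ?thesis using w unfolding corner_elems_def pathalg_def by auto
qed

lemma corner_mult:
  assumes x: "x \<in> corner_elems V E h t K i" and y: "y \<in> corner_elems V E h t K i"
  shows "pa_mult h x y \<in> corner_elems V E h t K i"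
proof -
  have "\<forall>r\<in>Poly_Mapping.keys (pa_mult h x y). valid_path V E h t r \<and> fst r = i \<and> pend h r = i"
  proof
    fix r assume "r \<in> Poly_Mapping.keys (pa_mult h x y)"
    then obtain p q where pq: "p \<in> Poly_Mapping.keys x" "q \<in> Poly_Mapping.keys y" "pend h q = fst p" "r = pcomp p q"
      using keys_pa_mult[of h x y] by blast
    then show "valid_path V E h t r \<and> fst r = i \<and> pend h r = i"
      using x y valid_pcomp[of V E h t p q] pend_pcomp[of h q p]
      unfolding corner_elems_def pathalg_def by auto
  qed
  then show ?thesis unfolding corner_elems_def pathalg_def by auto
qed

lemma Lg_mult_corner:
  fixes g :: "('v,'a) path \<Rightarrow> 'm::comm_monoid_add"
  assumes gadd: "\<And>p q. g (pcomp p q) = g q + g p"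
    and x: "x \<in> corner_elems V E h t K i" and y: "y \<in> corner_elems V E h t K i"
  shows "Lg g (pa_mult h x y) = Lg g x * Lg g y"
proof -
  have "Lg g (pa_mult h x y) = Phi h g i i (pa_mult h x y)"
    by (rule corner_Lg[OF corner_mult[OF x y]])
  also have "\<dots> = (\<Sum>k\<in>{i}. Phi h g k i x * Phi h g i k y)"
    by (rule Phi_mult[OF gadd]) (use x in \<open>auto simp: corner_elems_def\<close>)
  also have "\<dots> = Lg g x * Lg g y"
    using corner_Lg[OF x, where g=g] corner_Lg[OF y, where g=g] by simp
  finally show ?thesis .
qed

lemma center_pathalg: "c \<in> dimer_center V E h t F K \<Longrightarrow> c \<in> pathalg V E h t K"
  by (simp add: dimer_center_def)

lemma center_eq:
  fixes g :: "('v,'a) path \<Rightarrow> 'm::cancel_comm_monoid_add" and K :: "'k::field itself"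
  assumes dq: "dimer_quiver V E h t F"
    and gadd: "\<And>p q. g (pcomp p q) = g q + g p" and g0: "\<And>v. g (v, []) = 0"
    and I0: "\<And>y s e. y \<in> dimer_ideal V E h t F K \<Longrightarrow> s \<in> V \<Longrightarrow> e \<in> V \<Longrightarrow> Phi h g s e y = 0"
    and c: "c \<in> dimer_center V E h t F K" and a: "a \<in> E"
  shows "Phi h g (h a) (h a) c = Phi h g (t a) (t a) c"
proof -
  have ha: "h a \<in> V" and ta: "t a \<in> V" using dq a by (auto simp: dimer_quiver_def)
  let ?A = "Poly_Mapping.single (t a, [a]) (1::'k)"
  let ?X = "Poly_Mapping.single (g (t a, [a])) (1::'k)"
  have vA: "valid_path V E h t (t a, [a])" using ta a by (simp add: valid_path_def)
  have Ap: "?A \<in> pathalg V E h t K" by (rule pathalg_single[OF vA])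
  have cp: "c \<in> pathalg V E h t K" using c by (rule center_pathalg)
  have "pa_mult h c ?A - pa_mult h ?A c \<in> dimer_ideal V E h t F K"
    using c Ap by (auto simp: dimer_center_def)
  then have 0: "Phi h g (t a) (h a) (pa_mult h c ?A - pa_mult h ?A c) = 0"
    using I0 ha ta by blast
  have "Phi h g (t a) (h a) (pa_mult h c ?A) = (\<Sum>k\<in>V. Phi h g k (h a) c * Phi h g (t a) k ?A)"
    by (rule Phi_mult[OF gadd]) (use dq pathalg_fst[OF cp] in \<open>auto simp: dimer_quiver_def\<close>)
  also have "\<dots> = (\<Sum>k\<in>V. if k = h a then Phi h g (h a) (h a) c * ?X else 0)"
    by (intro sum.cong refl) (auto simp: Phi_single pend_def)
  also have "\<dots> = Phi h g (h a) (h a) c * ?X"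
    using ha dq by (simp add: sum.delta dimer_quiver_def)
  finally have 1: "Phi h g (t a) (h a) (pa_mult h c ?A) = Phi h g (h a) (h a) c * ?X" .
  have "Phi h g (t a) (h a) (pa_mult h ?A c) = (\<Sum>k\<in>{t a}. Phi h g k (h a) ?A * Phi h g (t a) k c)"
    by (rule Phi_mult[OF gadd]) auto
  also have "\<dots> = ?X * Phi h g (t a) (t a) c"
    by (simp add: Phi_single pend_def)
  finally have 2: "Phi h g (t a) (h a) (pa_mult h ?A c) = ?X * Phi h g (t a) (t a) c" .
  have "?X * (Phi h g (h a) (h a) c - Phi h g (t a) (t a) c) = 0"
    using 0 1 2 by (simp add: Phi_diff algebra_simps)
  then have "Phi h g (h a) (h a) c - Phi h g (t a) (t a) c = 0"
    by (rule single_mult_cancel)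
  then show ?thesis by simp
qed

lemma center_off:
  fixes g :: "('v,'a) path \<Rightarrow> 'm::cancel_comm_monoid_add" and K :: "'k::field itself"
  assumes dq: "dimer_quiver V E h t F"
    and gadd: "\<And>p q. g (pcomp p q) = g q + g p" and g0: "\<And>v. g (v, []) = 0"
    and I0: "\<And>y s e. y \<in> dimer_ideal V E h t F K \<Longrightarrow> s \<in> V \<Longrightarrow> e \<in> V \<Longrightarrow> Phi h g s e y = 0"
    and c: "c \<in> dimer_center V E h t F K" and k: "k \<in> V" and i: "i \<in> V" and ki: "k \<noteq> i"
  shows "Phi h g k i c = 0"
proof -
  let ?A = "Poly_Mapping.single (k, []) (1::'k)"
  have Ap: "?A \<in> pathalg V E h t K" by (rule pathalg_single[OF valid_e[OF k]])
  have cp: "c \<in> pathalg V E h t K" using c by (rule center_pathalg)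
  have "pa_mult h c ?A - pa_mult h ?A c \<in> dimer_ideal V E h t F K"
    using c Ap by (auto simp: dimer_center_def)
  then have 0: "Phi h g k i (pa_mult h c ?A - pa_mult h ?A c) = 0"
    using I0 k i by blast
  have "Phi h g k i (pa_mult h c ?A) = (\<Sum>m\<in>V. Phi h g m i c * Phi h g k m ?A)"
    by (rule Phi_mult[OF gadd]) (use pathalg_fst[OF cp] dq in \<open>auto simp: dimer_quiver_def\<close>)
  also have "\<dots> = (\<Sum>m\<in>V. if m = k then Phi h g k i c else 0)"
    by (intro sum.cong refl) (auto simp: Phi_e g0)
  also have "\<dots> = Phi h g k i c"
    using k dq by (simp add: sum.delta dimer_quiver_def)
  finally have 1: "Phi h g k i (pa_mult h c ?A) = Phi h g k i c" .
  have "Phi h g k i (pa_mult h ?A c) = (\<Sum>m\<in>{k}. Phi h g m i ?A * Phi h g k m c)"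
    by (rule Phi_mult[OF gadd]) auto
  also have "\<dots> = 0"
    using ki by (simp add: Phi_e g0)
  finally have 2: "Phi h g k i (pa_mult h ?A c) = 0" .
  show ?thesis using 0 1 2 by (simp add: Phi_diff)
qed

lemma center_connect:
  fixes g :: "('v,'a) path \<Rightarrow> 'm::cancel_comm_monoid_add" and K :: "'k::field itself"
  assumes dq: "dimer_quiver V E h t F"
    and gadd: "\<And>p q. g (pcomp p q) = g q + g p" and g0: "\<And>v. g (v, []) = 0"
    and I0: "\<And>y s e. y \<in> dimer_ideal V E h t F K \<Longrightarrow> s \<in> V \<Longrightarrow> e \<in> V \<Longrightarrow> Phi h g s e y = 0"
    and c: "c \<in> dimer_center V E h t F K" and u: "u \<in> V" and w: "w \<in> V"
  shows "Phi h g u u c = Phi h g w w c"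
proof -
  have "(u, w) \<in> (und_edges E h t)\<^sup>*" using dq u w by (auto simp: dimer_quiver_def)
  then show ?thesis
  proof (induction rule: rtrancl_induct)
    case base
    then show ?case by simp
  next
    case (step y z)
    from step(2) obtain a where "a \<in> E" "(y = t a \<and> z = h a) \<or> (y = h a \<and> z = t a)"
      by (auto simp: und_edges_def)
    then show ?case using step(3) center_eq[OF dq gadd g0 I0 c] by metis
  qed
qed


lemma k_subalg_one: "1 \<in> k_subalg G"
  using k_subalg.const[of 1 G] by simp

lemma k_subalg_zero: "0 \<in> k_subalg G"
  using k_subalg.const[of 0 G] by simp

lemma k_subalg_prod:
  assumes "finite A" "\<And>a. a \<in> A \<Longrightarrow> f a \<in> k_subalg G"
  shows "prod f A \<in> k_subalg G"
  using assms by (induction A rule: finite_induct) (auto intro: k_subalg.mult k_subalg_one)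

lemma abstract_fg:
  fixes T :: "'i \<Rightarrow> (('d \<Rightarrow>\<^sub>0 nat) \<Rightarrow>\<^sub>0 'k::field) set" and \<beta> :: "'i \<Rightarrow> 'b \<Rightarrow> (('d \<Rightarrow>\<^sub>0 nat) \<Rightarrow>\<^sub>0 'k)"
  assumes finV: "finite V" and finB: "finite B"
    and Tmult: "\<And>i x y. i \<in> V \<Longrightarrow> x \<in> T i \<Longrightarrow> y \<in> T i \<Longrightarrow> x * y \<in> T i"
    and Tone: "\<And>i. i \<in> V \<Longrightarrow> 1 \<in> T i"
    and \<beta>T: "\<And>i b. i \<in> V \<Longrightarrow> b \<in> B \<Longrightarrow> \<beta> i b \<in> T i"
    and Tspan: "\<And>i x. i \<in> V \<Longrightarrow> x \<in> T i \<Longrightarrow> \<exists>c. (\<forall>b\<in>B. c b \<in> k_subalg X) \<and> x = (\<Sum>b\<in>B. c b * \<beta> i b)"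
  shows "fg_module (k_subalg X) (k_subalg (\<Union>i\<in>V. T i))"
proof -
  define R where "R = k_subalg X"
  define S where "S = k_subalg (\<Union>i\<in>V. T i)"
  define Bf where "Bf = (\<lambda>\<sigma>. \<Prod>k\<in>V. \<beta> k (\<sigma> k)) ` PiE V (\<lambda>_. B)"
  define W where "W = {s. \<exists>c. (\<forall>b\<in>Bf. c b \<in> R) \<and> s = (\<Sum>b\<in>Bf. c b * b)}"
  have finBf: "finite Bf" unfolding Bf_def using finV finB by (simp add: finite_PiE)
  have R1: "1 \<in> R" and Rc: "\<And>c. Poly_Mapping.single 0 c \<in> R"
    and Radd: "\<And>x y. x \<in> R \<Longrightarrow> y \<in> R \<Longrightarrow> x + y \<in> R"
    and Rmult: "\<And>x y. x \<in> R \<Longrightarrow> y \<in> R \<Longrightarrow> x * y \<in> R"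
    unfolding R_def by (auto intro: k_subalg.intros k_subalg_one)
  have W0: "0 \<in> W" unfolding W_def by (rule CollectI, rule exI[of _ "\<lambda>_. 0"]) (simp add: Rc[of 0, simplified])
  have Wadd: "x + y \<in> W" if "x \<in> W" "y \<in> W" for x y
  proof -
    from that obtain c d where "\<forall>b\<in>Bf. c b \<in> R" "x = (\<Sum>b\<in>Bf. c b * b)"
      "\<forall>b\<in>Bf. d b \<in> R" "y = (\<Sum>b\<in>Bf. d b * b)" unfolding W_def by blast
    then show ?thesis unfolding W_def
      by (intro CollectI exI[of _ "\<lambda>b. c b + d b"]) (simp add: Radd sum.distrib distrib_right)
  qed
  have Wsmul: "r * x \<in> W" if "r \<in> R" "x \<in> W" for r x
  proof -
    from that obtain c where "\<forall>b\<in>Bf. c b \<in> R" "x = (\<Sum>b\<in>Bf. c b * b)" unfolding W_def by blast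
    then show ?thesis unfolding W_def using that(1)
      by (intro CollectI exI[of _ "\<lambda>b. r * c b"]) (simp add: Rmult sum_distrib_left mult.assoc)
  qed
  have Wbase: "b \<in> W" if "b \<in> Bf" for b
    unfolding W_def
  proof (intro CollectI exI[of _ "\<lambda>b'. if b' = b then 1 else 0"] conjI)
    show "\<forall>b'\<in>Bf. (if b' = b then 1 else 0) \<in> R" using R1 Rc[of 0] by simp
    show "b = (\<Sum>b'\<in>Bf. (if b' = b then 1 else 0) * b')"
    proof -
      have eq: "(\<lambda>b'. (if b' = b then 1 else 0) * b') = (\<lambda>b'. if b' = b then b' else 0)" by (auto simp: fun_eq_iff)
      show ?thesis unfolding eq using finBf that by (simp add: sum.delta)
    qed
  qed
  have Wsum: "sum w I \<in> W" if "finite I" "\<And>j. j \<in> I \<Longrightarrow> w j \<in> W" for w and I :: "'z set"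
    using that by (induction I rule: finite_induct) (auto intro: W0 Wadd)
  have Rprod: "prod f A \<in> R" if "finite A" "\<And>a. a \<in> A \<Longrightarrow> f a \<in> R" for f and A :: "'i set"
    using that unfolding R_def by (rule k_subalg_prod)
  have star: "prod f V \<in> W" if f: "\<And>k. k \<in> V \<Longrightarrow> f k \<in> T k" for f
  proof -
    have "\<forall>k\<in>V. \<exists>c. (\<forall>b\<in>B. c b \<in> R) \<and> f k = (\<Sum>b\<in>B. c b * \<beta> k b)"
      using Tspan f unfolding R_def by blast
    then obtain C where C: "\<And>k. k \<in> V \<Longrightarrow> (\<forall>b\<in>B. C k b \<in> R) \<and> f k = (\<Sum>b\<in>B. C k b * \<beta> k b)"
      by metis
    have "prod f V = (\<Prod>k\<in>V. \<Sum>b\<in>B. C k b * \<beta> k b)"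
      using C by (intro prod.cong refl) auto
    also have "\<dots> = (\<Sum>\<sigma>\<in>PiE V (\<lambda>_. B). \<Prod>k\<in>V. C k (\<sigma> k) * \<beta> k (\<sigma> k))"
      by (rule prod_sum_PiE) (use finV finB in auto)
    also have "\<dots> = (\<Sum>\<sigma>\<in>PiE V (\<lambda>_. B). (\<Prod>k\<in>V. C k (\<sigma> k)) * (\<Prod>k\<in>V. \<beta> k (\<sigma> k)))"
      by (simp add: prod.distrib)
    also have "\<dots> \<in> W"
    proof (rule Wsum)
      show "finite (PiE V (\<lambda>_. B))" using finV finB by (simp add: finite_PiE)
      fix \<sigma> assume \<sigma>: "\<sigma> \<in> PiE V (\<lambda>_. B)"
      have "(\<Prod>k\<in>V. C k (\<sigma> k)) \<in> R"
        by (rule Rprod[OF finV]) (use C \<sigma> in \<open>auto simp: PiE_def Pi_def\<close>)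
      moreover have "(\<Prod>k\<in>V. \<beta> k (\<sigma> k)) \<in> W"
        by (rule Wbase) (use \<sigma> in \<open>auto simp: Bf_def\<close>)
      ultimately show "(\<Prod>k\<in>V. C k (\<sigma> k)) * (\<Prod>k\<in>V. \<beta> k (\<sigma> k)) \<in> W" by (rule Wsmul)
    qed
    finally show ?thesis .
  qed
  have W1: "1 \<in> W" using star[of "\<lambda>_. 1"] Tone by simp
  have gen_mult: "g * b \<in> W" if i: "i \<in> V" and g: "g \<in> T i" and b: "b \<in> Bf" for i g b
  proof -
    from b obtain \<sigma> where \<sigma>: "\<sigma> \<in> PiE V (\<lambda>_. B)" "b = (\<Prod>k\<in>V. \<beta> k (\<sigma> k))" unfolding Bf_def by blast
    define f where "f = (\<lambda>k. if k = i then g * \<beta> i (\<sigma> i) else \<beta> k (\<sigma> k))"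
    have "prod f V = f i * prod f (V - {i})" using finV i by (simp add: prod.remove)
    also have "prod f (V - {i}) = (\<Prod>k\<in>V - {i}. \<beta> k (\<sigma> k))" by (intro prod.cong refl) (auto simp: f_def)
    also have "f i * \<dots> = g * (\<beta> i (\<sigma> i) * (\<Prod>k\<in>V - {i}. \<beta> k (\<sigma> k)))" by (simp add: f_def mult.assoc)
    also have "\<beta> i (\<sigma> i) * (\<Prod>k\<in>V - {i}. \<beta> k (\<sigma> k)) = b"
      using finV i \<sigma>(2) by (simp add: prod.remove)
    finally have eq: "prod f V = g * b" .
    have "prod f V \<in> W"
    proof (rule star)
      fix k assume k: "k \<in> V"
      then have "\<beta> k (\<sigma> k) \<in> T k" using \<beta>T \<sigma>(1) by (auto simp: PiE_def Pi_def)
      then show "f k \<in> T k" unfolding f_def using Tmult g i k by auto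
    qed
    then show ?thesis using eq by simp
  qed
  have main: "\<forall>w\<in>W. s * w \<in> W" if "s \<in> S" for s
    using that unfolding S_def
  proof (induction rule: k_subalg.induct)
    case (const c)
    then show ?case using Wsmul Rc by blast
  next
    case (gen g)
    then obtain i where i: "i \<in> V" "g \<in> T i" by blast
    show ?case
    proof
      fix w assume "w \<in> W"
      then obtain c where c: "\<forall>b\<in>Bf. c b \<in> R" "w = (\<Sum>b\<in>Bf. c b * b)" unfolding W_def by blast
      have "g * w = (\<Sum>b\<in>Bf. c b * (g * b))" unfolding c(2) by (simp add: sum_distrib_left mult.left_commute)
      also have "\<dots> \<in> W"
        by (rule Wsum[OF finBf]) (use c(1) gen_mult[OF i] Wsmul in blast)
      finally show "g * w \<in> W" .
    qed
  next
    case (add x y)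
    then show ?case by (simp add: distrib_right Wadd)
  next
    case (mult x y)
    then show ?case by (simp add: mult.assoc)
  qed
  have SW: "S \<subseteq> W"
  proof
    fix s assume "s \<in> S"
    then show "s \<in> W" using main W1 by fastforce
  qed
  have BfS: "Bf \<subseteq> S"
  proof
    fix b assume "b \<in> Bf"
    then obtain \<sigma> where \<sigma>: "\<sigma> \<in> PiE V (\<lambda>_. B)" "b = (\<Prod>k\<in>V. \<beta> k (\<sigma> k))" unfolding Bf_def by blast
    show "b \<in> S" unfolding \<sigma>(2) S_def
      by (rule k_subalg_prod[OF finV], rule k_subalg.gen) (use \<sigma>(1) \<beta>T in \<open>auto simp: PiE_def Pi_def\<close>)
  qed
  show ?thesis
    unfolding fg_module_def R_def[symmetric] S_def[symmetric]
    using finBf BfS SW unfolding W_def by blast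
qed


theorem lemma3p16:
  fixes V :: "'v set" and E :: "'a set" and h t :: "'a \<Rightarrow> 'v" and F :: "'a list set"
    and V' :: "'w set" and E' :: "'a set" and h' t' :: "'a \<Rightarrow> 'w" and F' :: "'a list set"
    and \<pi> :: "'v \<Rightarrow> 'w" and Qs :: "'a set" and K :: "'k::field itself"
  assumes "alg_closed_field K"
    and "dimer_quiver V E h t F"
    and "nondegenerate E F"
    and "cyclic_contraction V E h t F V' E' h' t' F' \<pi> Qs K"
    and "fg_over_center V E h t F K"
  shows "fg_module (R_ring V E h t V' E' h' t' F' \<pi> Qs K) (S_ring V E h t V' E' h' t' F' \<pi> Qs K)"
proof -
  note dq = assms(2)
  from assms(4) have dq': "dimer_quiver V' E' h' t' F'"
    and cI: "contr_map \<pi> Qs ` dimer_ideal V E h t F K \<subseteq> dimer_ideal V' E' h' t' F' K"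
    by (auto simp: cyclic_contraction_def)
  define SM where "SM = simple_matchings V' E' h' t' F'"
  have SMpm: "\<forall>D\<in>SM. perfect_matching E' F' D"
    by (simp add: SM_def simple_matchings_def simple_matching_def)
  define g where "g = (\<lambda>p. tau_exp SM (contr_path \<pi> Qs p))"
  have gadd: "\<And>p q. g (pcomp p q) = g q + g p"
    by (simp add: g_def tau_exp_def contr_path_def pcomp_def)
  have g0: "\<And>v. g (v, []) = 0"
    by (simp add: g_def tau_exp_def contr_path_def)
  have Phifun: "(\<lambda>x. tau_bar SM (contr_map \<pi> Qs x)) = Lg g"
    by (simp add: fun_eq_iff tau_bar_Lg contr_map_Lg Lg_Lg g_def comp_def)
  have finV: "finite V" using dq by (simp add: dimer_quiver_def)
  have I0: "Phi h g s e y = 0" if y: "y \<in> dimer_ideal V E h t F K" and s: "s \<in> V" and e: "e \<in> V" for y s e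
  proof -
    define z where "z = pa_mult h (Poly_Mapping.single (e, []) (1::'k)) (pa_mult h y (Poly_Mapping.single (s, []) 1))"
    have zI: "z \<in> dimer_ideal V E h t F K"
      unfolding z_def
      by (rule dimer_ideal.lmult[OF dimer_ideal.rmult[OF y valid_e[OF s]] valid_e[OF e]])
    define cz where "cz = contr_map \<pi> Qs z"
    have czI: "cz \<in> dimer_ideal V' E' h' t' F' K" using cI zI by (auto simp: cz_def)
    define A' where "A' = fst ` Poly_Mapping.keys cz \<union> pend h' ` Poly_Mapping.keys cz"
    have "Lg (tau_exp SM) cz = (\<Sum>a\<in>A'. \<Sum>b\<in>A'. Phi h' (tau_exp SM) a b cz)"
      by (rule Lg_decomp) (auto simp: A'_def)
    also have "\<dots> = 0"
      using ideal_Phi_zero[OF dq' SMpm czI] by simp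
    finally have 1: "Lg (tau_exp SM) cz = 0" .
    have 2: "Lg (tau_exp SM) cz = Lg g z"
      by (simp add: cz_def contr_map_Lg Lg_Lg g_def comp_def)
    define A where "A = insert s (insert e (fst ` Poly_Mapping.keys z \<union> pend h ` Poly_Mapping.keys z))"
    have "Lg g z = (\<Sum>a\<in>A. \<Sum>b\<in>A. Phi h g a b z)"
      by (rule Lg_decomp) (auto simp: A_def)
    also have "\<dots> = (\<Sum>a\<in>A. \<Sum>b\<in>A. if a = s \<and> b = e then Phi h g s e y else 0)"
      unfolding z_def by (simp add: Phi_restr[OF gadd g0])
    also have "\<dots> = Phi h g s e y"
      by (rule sum_delta2) (auto simp: A_def)
    finally show ?thesis using 1 2 by simp
  qed
  define T where "T = (\<lambda>i. Lg g ` corner_elems V E h t K i)"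
  have Tmult: "x * y \<in> T i" if "i \<in> V" "x \<in> T i" "y \<in> T i" for i x y
  proof -
    from that obtain x0 y0 where "x0 \<in> corner_elems V E h t K i" "y0 \<in> corner_elems V E h t K i"
      "x = Lg g x0" "y = Lg g y0" unfolding T_def by blast
    then show ?thesis unfolding T_def
      using Lg_mult_corner[OF gadd] corner_mult by (metis image_eqI)
  qed
  have Tone: "1 \<in> T i" if i: "i \<in> V" for i
  proof -
    have "Poly_Mapping.single (i, []) (1::'k) \<in> corner_elems V E h t K i"
      using i by (simp add: corner_elems_def pathalg_def valid_path_def pend_def)
    moreover have "Lg g (Poly_Mapping.single (i, []) (1::'k)) = 1"
      by (simp add: Lg_single g0)
    ultimately show ?thesis unfolding T_def by (metis image_eqI)
  qed
  have diagT: "Phi h g i i w \<in> T i" if i: "i \<in> V" and w: "w \<in> pathalg V E h t K" for i w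
  proof -
    let ?z = "pa_mult h (Poly_Mapping.single (i, []) (1::'k)) (pa_mult h w (Poly_Mapping.single (i, []) 1))"
    have zc: "?z \<in> corner_elems V E h t K i" by (rule restr_corner[OF w i])
    have "Lg g ?z = Phi h g i i ?z" by (rule corner_Lg[OF zc])
    also have "\<dots> = Phi h g i i w" by (simp add: Phi_restr[OF gadd g0])
    finally show ?thesis unfolding T_def using zc by (metis image_eqI)
  qed
  from assms(5) obtain B where B: "finite B" "B \<subseteq> pathalg V E h t K"
    "\<forall>x\<in>pathalg V E h t K. \<exists>c. (\<forall>b\<in>B. c b \<in> dimer_center V E h t F K) \<and>
        x - (\<Sum>b\<in>B. pa_mult h (c b) b) \<in> dimer_ideal V E h t F K"
    unfolding fg_over_center_def by blast
  have Tspan: "\<exists>c. (\<forall>b\<in>B. c b \<in> k_subalg (\<Inter>i\<in>V. T i)) \<and> x = (\<Sum>b\<in>B. c b * Phi h g i i b)"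
    if i: "i \<in> V" and x: "x \<in> T i" for i x
  proof -
    from x obtain x0 where x0: "x0 \<in> corner_elems V E h t K i" "x = Lg g x0" unfolding T_def by blast
    have x0p: "x0 \<in> pathalg V E h t K" using x0(1) by (simp add: corner_elems_def)
    then obtain c where c: "\<forall>b\<in>B. c b \<in> dimer_center V E h t F K"
      "x0 - (\<Sum>b\<in>B. pa_mult h (c b) b) \<in> dimer_ideal V E h t F K" using B(3) by blast
    have "Phi h g i i (x0 - (\<Sum>b\<in>B. pa_mult h (c b) b)) = 0" by (rule I0[OF c(2) i i])
    then have "Phi h g i i x0 = (\<Sum>b\<in>B. Phi h g i i (pa_mult h (c b) b))"
      by (simp add: Phi_diff Phi_sum)
    also have "\<dots> = (\<Sum>b\<in>B. Phi h g i i (c b) * Phi h g i i b)"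
    proof (intro sum.cong refl)
      fix b assume b: "b \<in> B"
      have cb: "c b \<in> dimer_center V E h t F K" using c(1) b by blast
      have "Phi h g i i (pa_mult h (c b) b) = (\<Sum>k\<in>V. Phi h g k i (c b) * Phi h g i k b)"
        by (rule Phi_mult[OF gadd finV pathalg_fst[OF center_pathalg[OF cb]]])
      also have "\<dots> = (\<Sum>k\<in>V. if k = i then Phi h g i i (c b) * Phi h g i i b else 0)"
        by (intro sum.cong refl) (use center_off[OF dq gadd g0 I0 cb] i in auto)
      also have "\<dots> = Phi h g i i (c b) * Phi h g i i b" using finV i by (simp add: sum.delta)
      finally show "Phi h g i i (pa_mult h (c b) b) = Phi h g i i (c b) * Phi h g i i b" .
    qed
    finally have eq: "x = (\<Sum>b\<in>B. Phi h g i i (c b) * Phi h g i i b)"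
      using x0 corner_Lg[OF x0(1), where g=g] by simp
    have "\<forall>b\<in>B. Phi h g i i (c b) \<in> k_subalg (\<Inter>i\<in>V. T i)"
    proof
      fix b assume b: "b \<in> B"
      have cb: "c b \<in> dimer_center V E h t F K" using c(1) b by blast
      have "Phi h g i i (c b) \<in> (\<Inter>j\<in>V. T j)"
      proof
        fix j assume j: "j \<in> V"
        have "Phi h g i i (c b) = Phi h g j j (c b)"
          by (rule center_connect[OF dq gadd g0 I0 cb i j])
        then show "Phi h g i i (c b) \<in> T j" using diagT[OF j center_pathalg[OF cb]] by simp
      qed
      then show "Phi h g i i (c b) \<in> k_subalg (\<Inter>i\<in>V. T i)" by (rule k_subalg.gen)
    qed
    then show ?thesis using eq by (intro exI[of _ "\<lambda>b. Phi h g i i (c b)"]) simp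
  qed
  have \<beta>T: "Phi h g i i b \<in> T i" if "i \<in> V" "b \<in> B" for i b
    using diagT that B(2) by blast
  have "fg_module (k_subalg (\<Inter>i\<in>V. T i)) (k_subalg (\<Union>i\<in>V. T i))"
    by (rule abstract_fg[OF finV B(1), of T "\<lambda>i b. Phi h g i i b"]) (use Tmult Tone \<beta>T Tspan in auto)
  moreover have "R_ring V E h t V' E' h' t' F' \<pi> Qs K = k_subalg (\<Inter>i\<in>V. T i)"
    unfolding R_ring_def taupsi_corner_def SM_def[symmetric] Phifun T_def by (rule refl)
  moreover have "S_ring V E h t V' E' h' t' F' \<pi> Qs K = k_subalg (\<Union>i\<in>V. T i)"
    unfolding S_ring_def taupsi_corner_def SM_def[symmetric] Phifun T_def by (rule refl)
  ultimately show ?thesis by simp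
qed

end
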